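(* Let $G$ be a connected graph of order $n\ge 3$. If $px_n(G)=2$, then $G$ is traceable (i.e. $G$ has a Hamilton path).
   Context: All graphs are finite, simple, undirected and connected. An edge-coloring of a graph assigns a color to each edge (adjacent edges may receive the same color). A tree in an edge-colored graph is proper if any two adjacent edges of the tree receive different colors. For $S\subseteq V(G)$, an $S$-tree is a subgraph of $G$ that is a tree containing all vertices of $S$. For a connected graph $G$ of order $n$ and an integer $k$ with $2\le k\le n$, an edge-coloring of $G$ is a $k$-proper coloring if for every set $S$ of $k$ vertices of $G$ there exists a proper $S$-tree in $G$. The $k$-proper index $px_k(G)$ is the minimum number of colors used in a $k$-proper coloring of $G$. *)

theory Defs
  imports Main
begin

definition simple_graph :: "'a set \<Rightarrow> 'a set set \<Rightarrow> bool" where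
  "simple_graph V E \<longleftrightarrow> finite V \<and> (\<forall>e\<in>E. e \<subseteq> V \<and> card e = 2)"

fun is_walk :: "'a set set \<Rightarrow> 'a list \<Rightarrow> bool" where
  "is_walk E [] = False"
| "is_walk E [v] = True"
| "is_walk E (u # v # vs) = ({u, v} \<in> E \<and> is_walk E (v # vs))"

definition connected_graph :: "'a set \<Rightarrow> 'a set set \<Rightarrow> bool" where
  "connected_graph V E \<longleftrightarrow> V \<noteq> {} \<and>
     (\<forall>u\<in>V. \<forall>v\<in>V. \<exists>p. is_walk E p \<and> set p \<subseteq> V \<and> hd p = u \<and> last p = v)"

definition verts_of :: "'a set set \<Rightarrow> 'a set" where
  "verts_of T = \<Union> T"

text \<open>A subgraph of (V,E) with vertex set W and edge set T is a tree if it is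
connected and has exactly card W - 1 edges (equivalently: connected and acyclic).\<close>

definition is_tree :: "'a set \<Rightarrow> 'a set set \<Rightarrow> bool" where
  "is_tree W T \<longleftrightarrow> connected_graph W T \<and> (\<forall>e\<in>T. e \<subseteq> W) \<and> card T + 1 = card W"

definition is_subtree :: "'a set \<Rightarrow> 'a set set \<Rightarrow> 'a set \<Rightarrow> 'a set set \<Rightarrow> bool" where
  "is_subtree V E W T \<longleftrightarrow> W \<subseteq> V \<and> T \<subseteq> E \<and> is_tree W T"

definition proper_tree :: "('a set \<Rightarrow> 'c) \<Rightarrow> 'a set set \<Rightarrow> bool" where
  "proper_tree c T \<longleftrightarrow> (\<forall>e\<in>T. \<forall>f\<in>T. e \<noteq> f \<and> e \<inter> f \<noteq> {} \<longrightarrow> c e \<noteq> c f)"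

definition k_proper_coloring :: "'a set \<Rightarrow> 'a set set \<Rightarrow> nat \<Rightarrow> ('a set \<Rightarrow> nat) \<Rightarrow> bool" where
  "k_proper_coloring V E k c \<longleftrightarrow>
     (\<forall>S. S \<subseteq> V \<and> card S = k \<longrightarrow>
        (\<exists>W T. is_subtree V E W T \<and> S \<subseteq> W \<and> proper_tree c T))"

definition proper_index :: "'a set \<Rightarrow> 'a set set \<Rightarrow> nat \<Rightarrow> nat" where
  "proper_index V E k = (LEAST m. \<exists>c. k_proper_coloring V E k c \<and> card (c ` E) = m)"

definition traceable :: "'a set \<Rightarrow> 'a set set \<Rightarrow> bool" where
  "traceable V E \<longleftrightarrow> (\<exists>p. is_walk E p \<and> distinct p \<and> set p = V)"

end

theory Submission
  imports Defs
begin

lemma walk_nonempty: "is_walk E p \<Longrightarrow> p \<noteq> []"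
  by (cases p) auto

lemma walk_mono: "is_walk T p \<Longrightarrow> T \<subseteq> E \<Longrightarrow> is_walk E p"
  by (induction T p rule: is_walk.induct) auto

lemma walk_snoc: "is_walk E p \<Longrightarrow> {last p, b} \<in> E \<Longrightarrow> is_walk E (p @ [b])"
  by (induction E p rule: is_walk.induct) auto

lemma walk_rev: "is_walk E p \<Longrightarrow> is_walk E (rev p)"
proof (induction E p rule: is_walk.induct)
  case (3 E u v vs)
  then have "is_walk E (rev (v # vs))" "{v, u} \<in> E" by (auto simp: insert_commute)
  moreover have "last (rev (v # vs)) = v" by simp
  ultimately show ?case using walk_snoc by fastforce
qed auto

lemma walk_join: "is_walk E p \<Longrightarrow> is_walk E q \<Longrightarrow> last p = hd q \<Longrightarrow> is_walk E (p @ tl q)"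
proof (induction E p rule: is_walk.induct)
  case (2 E v)
  then show ?case by (cases q) auto
next
  case (3 E u v vs)
  then show ?case by auto
qed auto

lemma walk_edge: "is_walk E p \<Longrightarrow> Suc i < length p \<Longrightarrow> {p!i, p!Suc i} \<in> E"
proof (induction E p arbitrary: i rule: is_walk.induct)
  case (3 E u v vs)
  then show ?case by (cases i) auto
qed auto

lemma walk_cross: "is_walk E p \<Longrightarrow> hd p \<in> A \<Longrightarrow> last p \<notin> A \<Longrightarrow>
   \<exists>a b. {a,b} \<in> E \<and> a \<in> A \<and> b \<notin> A"
proof (induction E p rule: is_walk.induct)
  case (3 E u v vs)
  then show ?case by (cases "v \<in> A") auto
qed auto

definition reach :: "'a set set \<Rightarrow> 'a set \<Rightarrow> 'a \<Rightarrow> 'a \<Rightarrow> bool" where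
  "reach E A u v \<longleftrightarrow> (\<exists>p. is_walk E p \<and> set p \<subseteq> A \<and> hd p = u \<and> last p = v)"

lemma reach_refl: "u \<in> A \<Longrightarrow> reach E A u u"
  unfolding reach_def by (rule exI[of _ "[u]"]) auto

lemma reach_sym: "reach E A u v \<Longrightarrow> reach E A v u"
  unfolding reach_def
  by (metis walk_rev walk_nonempty hd_rev last_rev set_rev)

lemma reach_trans: "reach E A u v \<Longrightarrow> reach E A v w \<Longrightarrow> reach E A u w"
proof -
  assume "reach E A u v" "reach E A v w"
  then obtain p q where p: "is_walk E p" "set p \<subseteq> A" "hd p = u" "last p = v"
    and q: "is_walk E q" "set q \<subseteq> A" "hd q = v" "last q = w" unfolding reach_def by blast
  have ne: "p \<noteq> []" "q \<noteq> []" using p q walk_nonempty by auto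
  have "is_walk E (p @ tl q)" using walk_join[OF p(1) q(1)] p q by simp
  moreover have "set (p @ tl q) \<subseteq> A" using p q ne by (cases q) auto
  moreover have "hd (p @ tl q) = u" using p ne by simp
  moreover have "last (p @ tl q) = w"
    using p q ne by (cases q; cases "tl q") auto
  ultimately show ?thesis unfolding reach_def by blast
qed

lemma reach_mono: "reach T A u v \<Longrightarrow> T \<subseteq> E \<Longrightarrow> A \<subseteq> B \<Longrightarrow> reach E B u v"
  unfolding reach_def using walk_mono by blast

lemma reach_edge: "{u,v} \<in> E \<Longrightarrow> u \<in> A \<Longrightarrow> v \<in> A \<Longrightarrow> reach E A u v"
  unfolding reach_def by (rule exI[of _ "[u,v]"]) auto

lemma connected_reach: "connected_graph V E \<longleftrightarrow> V \<noteq> {} \<and> (\<forall>u\<in>V. \<forall>v\<in>V. reach E V u v)"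
  unfolding connected_graph_def reach_def by blast

lemma grow_tree:
  assumes sg: "simple_graph V E" and con: "connected_graph V E"
    and st: "is_subtree V E W T" and ne: "W \<noteq> {}" and nv: "W \<noteq> V"
  shows "\<exists>x u. x \<in> V - W \<and> is_subtree V E (insert x W) (insert {u,x} T)"
proof -
  have WV: "W \<subseteq> V" using st unfolding is_subtree_def by blast
  obtain w where w: "w \<in> W" using ne by blast
  obtain v where v: "v \<in> V" "v \<notin> W" using WV nv by blast
  obtain p where p: "is_walk E p" "set p \<subseteq> V" "hd p = w" "last p = v"
    using con w WV v unfolding connected_graph_def by blast
  obtain a b where ab: "{a,b} \<in> E" "a \<in> W" "b \<notin> W" using walk_cross[OF p(1), of W] p w v by auto
  have bV: "b \<in> V" using sg ab(1) unfolding simple_graph_def by blast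
  have finV: "finite V" using sg unfolding simple_graph_def by blast
  have finE: "finite E"
  proof -
    have "E \<subseteq> Pow V" using sg unfolding simple_graph_def by blast
    then show ?thesis using finV finite_subset by blast
  qed
  have TE: "T \<subseteq> E" and tr: "is_tree W T" using st unfolding is_subtree_def by auto
  have Tsub: "\<forall>e\<in>T. e \<subseteq> W" and ct: "card T + 1 = card W" and cW: "connected_graph W T"
    using tr unfolding is_tree_def by auto
  have notin: "{a,b} \<notin> T" using Tsub ab by blast
  have finT: "finite T" using TE finE finite_subset by blast
  have finW: "finite W" using WV finV finite_subset by blast
  let ?W = "insert b W" and ?T = "insert {a,b} T"
  have ra: "\<forall>y\<in>?W. reach ?T ?W a y"
  proof
    fix y assume y: "y \<in> ?W"
    show "reach ?T ?W a y"
    proof (cases "y = b")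
      case True then show ?thesis using reach_edge[of a b ?T ?W] ab by auto
    next
      case False
      then have "y \<in> W" using y by auto
      then have "reach T W a y" using cW ab(2) unfolding connected_reach by simp
      then show ?thesis by (rule reach_mono) auto
    qed
  qed
  have "connected_graph ?W ?T" unfolding connected_reach
  proof (intro conjI ballI)
    fix y z assume yz: "y \<in> ?W" "z \<in> ?W"
    have r1: "reach ?T ?W a y" using ra yz(1) by (rule bspec)
    have r2: "reach ?T ?W a z" using ra yz(2) by (rule bspec)
    show "reach ?T ?W y z" using reach_sym[OF r1] r2 by (rule reach_trans)
  qed simp
  moreover have "\<forall>e\<in>?T. e \<subseteq> ?W" using Tsub ab by auto
  moreover have "card ?T + 1 = card ?W" using notin finT finW ab ct by simp
  ultimately have "is_subtree V E ?W ?T" unfolding is_subtree_def is_tree_def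
    using WV bV TE ab by auto
  then show ?thesis using bV ab by blast
qed

lemma spanning_tree_aux:
  assumes sg: "simple_graph V E" and con: "connected_graph V E"
  shows "\<forall>W T. is_subtree V E W T \<and> W \<noteq> {} \<and> card (V - W) = n \<longrightarrow> (\<exists>T'. is_subtree V E V T')"
proof (induction n)
  case 0
  have finV: "finite V" using sg unfolding simple_graph_def by blast
  show ?case
  proof (intro allI impI)
    fix W T assume h: "is_subtree V E W T \<and> W \<noteq> {} \<and> card (V - W) = 0"
    then have "W \<subseteq> V" unfolding is_subtree_def by blast
    moreover have "V - W = {}" using h finV by auto
    ultimately have "W = V" by blast
    then show "\<exists>T'. is_subtree V E V T'" using h by blast
  qed
next
  case (Suc n)
  have finV: "finite V" using sg unfolding simple_graph_def by blast
  show ?case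
  proof (intro allI impI)
    fix W T assume h: "is_subtree V E W T \<and> W \<noteq> {} \<and> card (V - W) = Suc n"
    then have "W \<noteq> V" by auto
    then obtain x u where x: "x \<in> V - W" "is_subtree V E (insert x W) (insert {u,x} T)"
      using grow_tree[OF sg con] h by blast
    have "V - insert x W = (V - W) - {x}" by auto
    then have "card (V - insert x W) = n" using h x finV by simp
    then show "\<exists>T'. is_subtree V E V T'" using Suc.IH x by blast
  qed
qed

lemma spanning_tree:
  assumes sg: "simple_graph V E" and con: "connected_graph V E"
  shows "\<exists>T. is_subtree V E V T"
proof -
  obtain v where v: "v \<in> V" using con unfolding connected_graph_def by blast
  have "is_subtree V E {v} {}" unfolding is_subtree_def is_tree_def connected_graph_def
    using v by (auto intro!: exI[of _ "[v]"])
  then show ?thesis using spanning_tree_aux[OF sg con] by blast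
qed

theorem mainTheorem5:
  fixes V :: "'a set" and E :: "'a set set"
  assumes "simple_graph V E"
    and "connected_graph V E"
    and "card V \<ge> 3"
    and "proper_index V E (card V) = 2"
  shows "traceable V E"
proof -
  have sg: "simple_graph V E" and con: "connected_graph V E" using assms by auto
  have finV: "finite V" using sg unfolding simple_graph_def by blast
  have finE: "finite E"
  proof -
    have "E \<subseteq> Pow V" using sg unfolding simple_graph_def by blast
    then show ?thesis using finV finite_subset by blast
  qed
  obtain f :: "'a set \<Rightarrow> nat" and m where f: "inj_on f E"
    using finite_imp_inj_to_nat_seg[OF finE] by blast
  obtain T0 where T0: "is_subtree V E V T0" using spanning_tree[OF sg con] by blast
  have "k_proper_coloring V E (card V) f"
    unfolding k_proper_coloring_def
  proof (intro allI impI)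
    fix S assume "S \<subseteq> V \<and> card S = card V"
    moreover have "proper_tree f T0" unfolding proper_tree_def
      using T0 f unfolding is_subtree_def inj_on_def by blast
    ultimately show "\<exists>W T. is_subtree V E W T \<and> S \<subseteq> W \<and> proper_tree f T" using T0 by blast
  qed
  then have "\<exists>m c. k_proper_coloring V E (card V) c \<and> card (c ` E) = m" by blast
  then have "\<exists>c. k_proper_coloring V E (card V) c \<and> card (c ` E) = proper_index V E (card V)"
    unfolding proper_index_def by (rule LeastI_ex)
  then obtain c where c: "k_proper_coloring V E (card V) c" "card (c ` E) = 2"
    using assms(4) by auto
  obtain W T where WT: "is_subtree V E W T" "V \<subseteq> W" "proper_tree c T"
    using c(1) unfolding k_proper_coloring_def by blast
  have WV: "W = V" using WT unfolding is_subtree_def by blast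
  have TE: "T \<subseteq> E" using WT unfolding is_subtree_def by blast
  have cT: "connected_graph V T" using WT WV unfolding is_subtree_def is_tree_def by blast
  have noth: "False" if "e1 \<in> T" "e2 \<in> T" "e3 \<in> T" "c e1 \<noteq> c e2" "c e1 \<noteq> c e3" "c e2 \<noteq> c e3"
    for e1 e2 e3
  proof -
    have "{c e1, c e2, c e3} \<subseteq> c ` E" using that TE by auto
    then have "card {c e1, c e2, c e3} \<le> 2" using c(2) finE
      by (metis card_mono finite_imageI)
    then show False using that by simp
  qed
  let ?P = "\<lambda>p. is_walk T p \<and> distinct p \<and> set p \<subseteq> V"
  obtain v where v: "v \<in> V" using con unfolding connected_graph_def by blast
  have P0: "?P [v]" using v by simp
  have bnd: "\<forall>y. ?P y \<longrightarrow> length y < card V + 1"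
  proof (intro allI impI)
    fix y assume "?P y"
    then have "card (set y) \<le> card V" using finV card_mono by blast
    then show "length y < card V + 1" using \<open>?P y\<close> distinct_card by fastforce
  qed
  obtain p where p: "?P p" and pmax: "\<forall>q. ?P q \<longrightarrow> length q \<le> length p"
    using ex_has_greatest_nat[of ?P "[v]" length "card V + 1"] P0 bnd by blast
  have pne: "p \<noteq> []" using p walk_nonempty by blast
  have "set p = V"
  proof (rule ccontr)
    assume "set p \<noteq> V"
    then obtain y where y: "y \<in> V" "y \<notin> set p" using p by blast
    have hp: "hd p \<in> V" using p pne by auto
    obtain q where q: "is_walk T q" "hd q = hd p" "last q = y"
      using cT hp y unfolding connected_graph_def by blast
    obtain a b where ab: "{a,b} \<in> T" "a \<in> set p" "b \<notin> set p"
      using walk_cross[OF q(1), of "set p"] q y pne by auto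
    have bV: "b \<in> V" using ab TE sg unfolding simple_graph_def by blast
    obtain i where i: "i < length p" "p ! i = a" using ab by (metis in_set_conv_nth)
    show False
    proof (cases "i = 0")
      case True
      then have "hd p = a" using pne i by (simp add: hd_conv_nth)
      then have "is_walk T (b # p)" using p pne ab by (cases p) (auto simp: insert_commute)
      then have "?P (b # p)" using p ab bV by simp
      then have "length (b # p) \<le> length p" using pmax by blast
      then show False by simp
    next
      case i0: False
      show False
      proof (cases "Suc i = length p")
        case True
        then have "last p = a" using pne i last_conv_nth[OF pne] by (metis diff_Suc_1)
        then have "is_walk T (p @ [b])" using p ab walk_snoc by metis
        then have "?P (p @ [b])" using p ab bV by simp
        then have "length (p @ [b]) \<le> length p" using pmax by blast
        then show False by simp
      next
        case False
        then have si: "Suc i < length p" using i by simp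
        obtain j where j: "i = Suc j" using i0 by (cases i) auto
        have e1: "{p!j, a} \<in> T" using walk_edge[of T p j] p si j i by auto
        have e2: "{a, p!Suc i} \<in> T" using walk_edge[of T p i] p si i by auto
        have dp: "distinct p" using p by blast
        have jl: "j < length p" "i < length p" "Suc i < length p" using si j by auto
        have d1: "p!j \<noteq> p!i" using nth_eq_iff_index_eq[OF dp jl(1) jl(2)] j by simp
        have d2: "p!Suc i \<noteq> p!i" using nth_eq_iff_index_eq[OF dp jl(3) jl(2)] by simp
        have d3: "p!j \<noteq> p!Suc i" using nth_eq_iff_index_eq[OF dp jl(1) jl(3)] j by simp
        have m1: "p!j \<in> set p" "p!Suc i \<in> set p" using jl by (simp_all add: nth_mem)
        have d: "p!j \<noteq> a" "p!Suc i \<noteq> a" "p!j \<noteq> p!Suc i" "b \<noteq> a" "b \<noteq> p!j" "b \<noteq> p!Suc i"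
          using d1 d2 d3 m1 i(2) ab(2) ab(3) by auto
        have n1: "{p!j, a} \<noteq> {a, p!Suc i}" using d by (auto simp: doubleton_eq_iff)
        have n2: "{p!j, a} \<noteq> {a, b}" using d by (auto simp: doubleton_eq_iff)
        have n3: "{a, p!Suc i} \<noteq> {a, b}" using d by (auto simp: doubleton_eq_iff)
        have pt: "\<forall>e\<in>T. \<forall>f\<in>T. e \<noteq> f \<and> e \<inter> f \<noteq> {} \<longrightarrow> c e \<noteq> c f"
          using WT(3) unfolding proper_tree_def .
        have c1: "c {p!j, a} \<noteq> c {a, p!Suc i}" using pt[rule_format, OF e1 e2] n1 by auto
        have c2: "c {p!j, a} \<noteq> c {a,b}" using pt[rule_format, OF e1 ab(1)] n2 by auto
        have c3: "c {a, p!Suc i} \<noteq> c {a,b}" using pt[rule_format, OF e2 ab(1)] n3 by auto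
        show False by (rule noth[OF e1 e2 ab(1) c1 c2 c3])
      qed
    qed
  qed
  moreover have "is_walk E p" using walk_mono[of T p E] p TE by simp
  ultimately show ?thesis unfolding traceable_def using p by blast
qed

end
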